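(* Let $\langle W,\mathcal{N},V\rangle$ be an nIML1-F1-model. For every formula $\varphi$ and every $w\in W$: if $w\Vdash\nabla\varphi$, then $u\Vdash\nabla\varphi$ for every $u\in\bigcap\mathcal{N}_w$.
   Context: Formulas are built from a denumerable set $PV$ of propositional variables and $\bot$ using binary $\land,\lor,\rightarrow$ and unary $\Delta,\nabla$. An nIML1-model is a triple $\langle W,\mathcal{N},V\rangle$ with $W\neq\emptyset$, $\mathcal{N}:W\to P(P(W))$ satisfying for all $w$: (a) $w\in\bigcap\mathcal{N}_w$; (b) $\bigcap\mathcal{N}_w\in\mathcal{N}_w$; (c) $u\in\bigcap\mathcal{N}_w\Rightarrow\bigcap\mathcal{N}_u\subseteq\bigcap\mathcal{N}_w$; (d) $\bigcap\mathcal{N}_w\subseteq X\subseteq\bigcup\mathcal{N}_w\Rightarrow X\in\mathcal{N}_w$; (e) $u\in\bigcap\mathcal{N}_w\Rightarrow\bigcup\mathcal{N}_u\subseteq\bigcup\mathcal{N}_w$ ($\bigcap\mathcal{N}_w$, $\bigcup\mathcal{N}_w$ the intersection and union of the family $\mathcal{N}_w$), and $V:PV\to P(W)$ with $w\in V(q)\Rightarrow\bigcap\mathcal{N}_w\subseteq V(q)$. It is an nIML1-F1-model if moreover (F1): whenever $u\in\bigcap\mathcal{N}_w$ and $v\in\bigcup\mathcal{N}_w$, there is $z\in W$ with $z\in\bigcup\mathcal{N}_u$ and $z\in\bigcap\mathcal{N}_v$. Forcing: atoms via $V$; $\bot$ never; $\land,\lor$ pointwise; $w\Vdash\varphi\rightarrow\psi$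 iff every $v\in\bigcap\mathcal{N}_w$ has $v\nVdash\varphi$ or $v\Vdash\psi$; $w\Vdash\Delta\varphi$ iff every $v\in\bigcup\mathcal{N}_w$ has $v\Vdash\varphi$; $w\Vdash\nabla\varphi$ iff some $v\in\bigcup\mathcal{N}_w$ has $v\Vdash\varphi$. *)

theory Defs
  imports Main
begin

datatype 'v fm =
    Var 'v
  | Bot
  | And "'v fm" "'v fm"
  | Or "'v fm" "'v fm"
  | Imp "'v fm" "'v fm"
  | Delta "'v fm"
  | Nabla "'v fm"

definition nIML1_model :: "'w set \<Rightarrow> ('w \<Rightarrow> 'w set set) \<Rightarrow> ('v \<Rightarrow> 'w set) \<Rightarrow> bool" where
  "nIML1_model W N V \<longleftrightarrow>
     W \<noteq> {} \<and>
     (\<forall>w\<in>W. N w \<subseteq> Pow W) \<and>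
     (\<forall>q. V q \<subseteq> W) \<and>
     (\<forall>w\<in>W. w \<in> \<Inter>(N w)) \<and>
     (\<forall>w\<in>W. \<Inter>(N w) \<in> N w) \<and>
     (\<forall>w\<in>W. \<forall>u\<in>\<Inter>(N w). \<Inter>(N u) \<subseteq> \<Inter>(N w)) \<and>
     (\<forall>w\<in>W. \<forall>X. \<Inter>(N w) \<subseteq> X \<and> X \<subseteq> \<Union>(N w) \<longrightarrow> X \<in> N w) \<and>
     (\<forall>w\<in>W. \<forall>u\<in>\<Inter>(N w). \<Union>(N u) \<subseteq> \<Union>(N w)) \<and>
     (\<forall>q. \<forall>w\<in>V q. \<Inter>(N w) \<subseteq> V q)"

definition nIML1_F1_model :: "'w set \<Rightarrow> ('w \<Rightarrow> 'w set set) \<Rightarrow> ('v \<Rightarrow> 'w set) \<Rightarrow> bool" where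
  "nIML1_F1_model W N V \<longleftrightarrow>
     nIML1_model W N V \<and>
     (\<forall>w\<in>W. \<forall>u\<in>\<Inter>(N w). \<forall>v\<in>\<Union>(N w). \<exists>z\<in>W. z \<in> \<Union>(N u) \<and> z \<in> \<Inter>(N v))"

fun forces :: "('w \<Rightarrow> 'w set set) \<Rightarrow> ('v \<Rightarrow> 'w set) \<Rightarrow> 'w \<Rightarrow> 'v fm \<Rightarrow> bool" where
  "forces N V w (Var q) = (w \<in> V q)"
| "forces N V w Bot = False"
| "forces N V w (And a b) = (forces N V w a \<and> forces N V w b)"
| "forces N V w (Or a b) = (forces N V w a \<or> forces N V w b)"
| "forces N V w (Imp a b) = (\<forall>v\<in>\<Inter>(N w). \<not> forces N V v a \<or> forces N V v b)"
| "forces N V w (Delta a) = (\<forall>v\<in>\<Union>(N w). forces N V v a)"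
| "forces N V w (Nabla a) = (\<exists>v\<in>\<Union>(N w). forces N V v a)"

end

theory Submission
  imports Defs
begin
lemma MD: assumes "nIML1_F1_model W N V" shows "nIML1_model W N V"
  using assms unfolding nIML1_F1_model_def by (rule conjunct1)

lemma F1D: assumes "nIML1_F1_model W N V" "w \<in> W" "u \<in> \<Inter>(N w)" "v \<in> \<Union>(N w)"
  shows "\<exists>z\<in>W. z \<in> \<Union>(N u) \<and> z \<in> \<Inter>(N v)"
proof -
  have H: "\<forall>w\<in>W. \<forall>u\<in>\<Inter>(N w). \<forall>v\<in>\<Union>(N w). \<exists>z\<in>W. z \<in> \<Union>(N u) \<and> z \<in> \<Inter>(N v)"
    using assms(1) unfolding nIML1_F1_model_def by (rule conjunct2)
  have "\<forall>v\<in>\<Union>(N w). \<exists>z\<in>W. z \<in> \<Union>(N u) \<and> z \<in> \<Inter>(N v)"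
    using bspec[OF bspec[OF H assms(2)] assms(3)] .
  thus ?thesis using assms(4) by (rule bspec)
qed

lemma Msub: assumes "nIML1_model W N V" "w \<in> W" "x \<in> \<Union>(N w)" shows "x \<in> W"
proof -
  have "\<forall>w\<in>W. N w \<subseteq> Pow W" using assms(1) unfolding nIML1_model_def by simp
  thus ?thesis using assms(2,3) by blast
qed

lemma Mc: assumes "nIML1_model W N V" "w \<in> W" "u \<in> \<Inter>(N w)" shows "\<Inter>(N u) \<subseteq> \<Inter>(N w)"
proof -
  have "\<forall>w\<in>W. \<forall>u\<in>\<Inter>(N w). \<Inter>(N u) \<subseteq> \<Inter>(N w)" using assms(1) unfolding nIML1_model_def by simp
  thus ?thesis using assms(2,3) by simp
qed

lemma Me: assumes "nIML1_model W N V" "w \<in> W" "u \<in> \<Inter>(N w)" shows "\<Union>(N u) \<subseteq> \<Union>(N w)"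
proof -
  have "\<forall>w\<in>W. \<forall>u\<in>\<Inter>(N w). \<Union>(N u) \<subseteq> \<Union>(N w)" using assms(1) unfolding nIML1_model_def by simp
  thus ?thesis using assms(2,3) by simp
qed

lemma MV: assumes "nIML1_model W N V" "w \<in> V q" shows "\<Inter>(N w) \<subseteq> V q"
proof -
  have "\<forall>q. \<forall>w\<in>V q. \<Inter>(N w) \<subseteq> V q" using assms(1) unfolding nIML1_model_def by simp
  thus ?thesis using assms(2) by simp
qed
lemma persist:
  assumes M: "nIML1_F1_model W N V"
  shows "\<And>v z. v \<in> W \<Longrightarrow> z \<in> \<Inter>(N v) \<Longrightarrow> forces N V v \<phi> \<Longrightarrow> forces N V z \<phi>"
proof (induction \<phi>)
  case (Var q) thus ?case using MV[OF MD[OF M], of v q] by auto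
next
  case Bot thus ?case by simp
next
  case (And a b) thus ?case by simp
next
  case (Or a b) thus ?case by auto
next
  case (Imp a b)
  have "\<Inter>(N z) \<subseteq> \<Inter>(N v)" using Mc[OF MD[OF M]] Imp.prems by blast
  thus ?case using Imp.prems by auto
next
  case (Delta a)
  have "\<Union>(N z) \<subseteq> \<Union>(N v)" using Me[OF MD[OF M]] Delta.prems by blast
  thus ?case using Delta.prems by auto
next
  case (Nabla a)
  from Nabla.prems obtain x where x: "x \<in> \<Union>(N v)" "forces N V x a" by auto
  have xW: "x \<in> W" using Msub[OF MD[OF M] Nabla.prems(1) x(1)] .
  obtain y where y: "y \<in> W" "y \<in> \<Union>(N z)" "y \<in> \<Inter>(N x)"
    using F1D[OF M Nabla.prems(1,2) x(1)] by blast
  have "forces N V y a" using Nabla.IH[OF xW y(3) x(2)] .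
  thus ?case using y(2) by auto
qed

theorem lemma9p1:
  fixes W :: "'w set" and N :: "'w \<Rightarrow> 'w set set" and V :: "'v \<Rightarrow> 'w set"
    and \<phi> :: "'v fm" and w u :: 'w
  assumes "nIML1_F1_model W N V"
    and "w \<in> W"
    and "forces N V w (Nabla \<phi>)"
    and "u \<in> \<Inter>(N w)"
  shows "forces N V u (Nabla \<phi>)"
proof -
  show ?thesis
    using persist[OF assms(1) assms(2) assms(4) assms(3)] .
qed

end
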